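(* For every $X \in L^\infty$, the expectation $\mathbb{E}[X]$ is non-empty. Moreover, $\mathbb{E}[X]$ is the smallest closed ball in $\mathbb{K}$ that contains $\mathrm{supp}\, X$ (the closed support of the law of $X$); it is a closed ball of radius $\varepsilon(X)$ (a single point being regarded as a ball of radius $0$).
   Context: $\mathbb{K}$ is a local field (a locally compact, non-discrete, totally disconnected topological field) with non-archimedean absolute value $|\cdot|$ satisfying $|x|=0 \iff x=0$, $|xy|=|x||y|$ and $|x+y|\le |x|\vee|y|$; its nonzero values are the powers $q^k$, $k\in\mathbb{Z}$, for some $q=p^c$ with $p$ prime. $(\Omega,\mathcal{F},\mathbb{P})$ is a probability space and a $\mathbb{K}$-valued random variable is a measurable map into $\mathbb{K}$ with its Borel $\sigma$-field; random variables equal a.s. are identified. $L^\infty$ is the space of $\mathbb{K}$-valued random variables $X$ with $\|X\|_\infty:=\operatorname{ess\,sup}|X|<\infty$. For $X\in L^\infty$, $\varepsilon(X):=\inf\{\|X-c\|_\infty : c\in\mathbb{K}\}$ and the expectation of $X$ is the subset $\mathbb{E}[X]:=\{c\in\mathbb{K} : \|X-c\|_\infty=\varepsilon(X)\}$ of $\mathbb{K}$. *)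

theory Defs
  imports "HOL-Analysis.Analysis" "HOL-Probability.Probability"
begin

text \<open>The local field K is modelled as a type 'k of sort {field, metric_space}
  whose metric is induced by a non-archimedean absolute value absv with value
  group q^Z, q = p^c, p prime.\<close>

definition local_field_absv :: "('k::{field,metric_space} \<Rightarrow> real) \<Rightarrow> real \<Rightarrow> bool" where
  "local_field_absv absv q \<longleftrightarrow>
     (\<forall>x y. dist x y = absv (x - y)) \<and>
     (\<forall>x. absv x = 0 \<longleftrightarrow> x = 0) \<and>
     (\<forall>x y. absv (x * y) = absv x * absv y) \<and>
     (\<forall>x y. absv (x + y) \<le> max (absv x) (absv y)) \<and>
     (\<exists>p c. prime (p::nat) \<and> c \<ge> (1::nat) \<and> q = real (p ^ c)) \<and>
     absv ` (UNIV - {0}) = range (\<lambda>k::int. q powi k) \<and>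
     locally compact (UNIV :: 'k set) \<and>
     (\<forall>x::'k. x islimpt UNIV) \<and>
     (\<forall>S::'k set. connected S \<longrightarrow> (\<exists>a. S \<subseteq> {a}))"

definition norm_inf :: "'a measure \<Rightarrow> ('k \<Rightarrow> real) \<Rightarrow> ('a \<Rightarrow> 'k) \<Rightarrow> ereal" where
  "norm_inf M absv X = esssup M (\<lambda>\<omega>. ereal (absv (X \<omega>)))"

definition in_Linf :: "'a measure \<Rightarrow> ('k::topological_space \<Rightarrow> real) \<Rightarrow> ('a \<Rightarrow> 'k) \<Rightarrow> bool" where
  "in_Linf M absv X \<longleftrightarrow> X \<in> borel_measurable M \<and> norm_inf M absv X < \<infinity>"

definition eps_dev :: "'a measure \<Rightarrow> ('k::ab_group_add \<Rightarrow> real) \<Rightarrow> ('a \<Rightarrow> 'k) \<Rightarrow> ereal" where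
  "eps_dev M absv X = (INF c. norm_inf M absv (\<lambda>\<omega>. X \<omega> - c))"

definition nexp :: "'a measure \<Rightarrow> ('k::ab_group_add \<Rightarrow> real) \<Rightarrow> ('a \<Rightarrow> 'k) \<Rightarrow> 'k set" where
  "nexp M absv X = {c. norm_inf M absv (\<lambda>\<omega>. X \<omega> - c) = eps_dev M absv X}"

definition law_support :: "'a measure \<Rightarrow> ('a \<Rightarrow> 'k::topological_space) \<Rightarrow> 'k set" where
  "law_support M X = {x. \<forall>U. open U \<longrightarrow> x \<in> U \<longrightarrow> emeasure (distr M borel X) U > 0}"

end

theory Submission
  imports Defs
begin


lemma lf_q:
  assumes "local_field_absv absv q" shows "q \<ge> 2"
proof -
  have "\<exists>p c. prime (p::nat) \<and> c \<ge> (1::nat) \<and> q = real (p ^ c)"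
    using assms unfolding local_field_absv_def by (elim conjE) assumption
  then obtain p c where pc: "prime (p::nat)" "c \<ge> (1::nat)" "q = real (p ^ c)"
    by blast
  have p2: "p \<ge> 2" using pc(1) by (rule prime_ge_2_nat)
  have "p \<le> p ^ c" by (rule self_le_power) (use pc(2) p2 in auto)
  then have "2 \<le> p ^ c" using p2 by linarith
  then have "real 2 \<le> real (p ^ c)" by (rule of_nat_mono)
  then show ?thesis using pc(3) by simp
qed

lemma lf_dist0:
  fixes absv :: "'k::{field,metric_space} \<Rightarrow> real"
  assumes "local_field_absv absv q"
  shows "\<forall>x y. dist x y = absv (x - y)"
  using assms unfolding local_field_absv_def by (elim conjE) assumption

lemma lf_zero0:
  fixes absv :: "'k::{field,metric_space} \<Rightarrow> real"
  assumes "local_field_absv absv q"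
  shows "\<forall>x. absv x = 0 \<longleftrightarrow> x = 0"
  using assms unfolding local_field_absv_def by (elim conjE) assumption

lemma lf_mult0:
  fixes absv :: "'k::{field,metric_space} \<Rightarrow> real"
  assumes "local_field_absv absv q"
  shows "\<forall>x y. absv (x * y) = absv x * absv y"
  using assms unfolding local_field_absv_def by (elim conjE) assumption

lemma lf_ultra0:
  fixes absv :: "'k::{field,metric_space} \<Rightarrow> real"
  assumes "local_field_absv absv q"
  shows "\<forall>x y. absv (x + y) \<le> max (absv x) (absv y)"
  using assms unfolding local_field_absv_def by (elim conjE) assumption

lemma lf_vals:
  fixes absv :: "'k::{field,metric_space} \<Rightarrow> real"
  assumes "local_field_absv absv q"
  shows "absv ` (UNIV - {0}) = range (\<lambda>k::int. q powi k)"
  using assms unfolding local_field_absv_def by (elim conjE) assumption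

lemma lf_lc:
  fixes absv :: "'k::{field,metric_space} \<Rightarrow> real"
  assumes "local_field_absv absv q"
  shows "locally compact (UNIV :: 'k set)"
  using assms unfolding local_field_absv_def by (elim conjE) assumption

lemmas lf_dist = lf_dist0[rule_format] and lf_zero = lf_zero0[rule_format]
  and lf_mult = lf_mult0[rule_format] and lf_ultra = lf_ultra0[rule_format]

lemma lf_nonneg:
  assumes "local_field_absv absv q" shows "absv x \<ge> 0"
  using lf_dist[OF assms, of x 0] by (metis diff_zero zero_le_dist)

lemma lf_sym:
  assumes "local_field_absv absv q" shows "absv (x - y) = absv (y - x)"
  using lf_dist[OF assms] by (metis dist_commute)

lemma lf_val_cases:
  assumes "local_field_absv absv q" 
  shows "absv x = 0 \<or> (\<exists>k::int. absv x = q powi k)"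
proof (cases "x = 0")
  case True then show ?thesis using lf_zero[OF assms] by auto
next
  case False
  then have "absv x \<in> absv ` (UNIV - {0})" by auto
  then show ?thesis using lf_vals[OF assms] by auto
qed

lemma lf_exists_val:
  assumes "local_field_absv absv q" 
  shows "\<exists>t. t \<noteq> 0 \<and> absv t = q powi k"
proof -
  have "q powi k \<in> absv ` (UNIV - {0})" using lf_vals[OF assms] by auto
  then show ?thesis by auto
qed

lemma lf_div:
  assumes "local_field_absv absv q" "t \<noteq> 0"
  shows "absv (a / t) = absv a / absv t"
proof -
  have "absv a = absv (a / t * t)" using assms(2) by simp
  also have "\<dots> = absv (a/t) * absv t" by (rule lf_mult[OF assms(1)])
  finally show ?thesis using lf_zero[OF assms(1)] assms(2) by simp
qed

lemma lf_compact_cball: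
  fixes absv :: "'k::{field,metric_space} \<Rightarrow> real"
  assumes lf: "local_field_absv absv q"
  shows "compact (cball (c::'k) R)"
proof -
  have "locally compact (UNIV :: 'k set)" by (rule lf_lc[OF lf])
  then have "\<forall>(w::'k set) x. openin (top_of_set UNIV) w \<and> x \<in> w \<longrightarrow>
     (\<exists>u v. openin (top_of_set UNIV) u \<and> compact v \<and> x \<in> u \<and> u \<subseteq> v \<and> v \<subseteq> w)"
    unfolding locally_def .
  note H = this
  have "\<exists>u v. openin (top_of_set UNIV) u \<and> compact v \<and> (0::'k) \<in> u \<and> u \<subseteq> v \<and> v \<subseteq> UNIV"
    by (rule H[rule_format, of UNIV "0::'k"]) simp
  then obtain u v where uv: "openin (top_of_set UNIV) u" "compact v" "(0::'k) \<in> u" "u \<subseteq> v"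
    by blast
  have "open u" using uv(1) by (metis open_openin subtopology_UNIV)
  then obtain d where d: "d > 0" "ball 0 d \<subseteq> u" using open_contains_ball_eq[OF \<open>open u\<close>] uv(3) by blast
  have "cball (0::'k) (d/2) \<subseteq> v" using d uv(4) by (auto simp: subset_eq)
  then have K: "compact (cball (0::'k) (d/2))"
    using compact_Int_closed[OF uv(2) closed_cball, of 0 "d/2"] by (simp add: Int_absorb1)
  have q1: "q > 1" using lf_q[OF lf] by simp
  obtain n where n: "2 * \<bar>R\<bar> / d < q ^ n" using real_arch_pow[OF q1] by blast
  obtain t where t: "t \<noteq> 0" "absv t = q powi (int n)" using lf_exists_val[OF lf] by blast
  have at: "absv t > 2 * \<bar>R\<bar> / d" using t n by (simp add: power_int_of_nat)
  have "absv t \<noteq> 0" using lf_zero[OF lf, of t] t(1) by simp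
  then have atpos: "absv t > 0" using lf_nonneg[OF lf, of t] by (simp add: less_le)
  define f where "f = (\<lambda>z. c + t * z)"
  have cont: "continuous_on UNIV f"
    unfolding continuous_on_iff
  proof (intro ballI allI impI)
    fix x :: 'k and e :: real assume e: "e > 0"
    show "\<exists>da>0. \<forall>x'\<in>UNIV. dist x' x < da \<longrightarrow> dist (f x') (f x) < e"
    proof (intro exI[of _ "e / absv t"] conjI ballI impI)
      show "e / absv t > 0" using e atpos by simp
      fix x' assume "dist x' x < e / absv t"
      moreover have "dist (f x') (f x) = absv t * dist x' x"
      proof -
        have "f x' - f x = t * (x' - x)" unfolding f_def by (simp add: algebra_simps)
        then show ?thesis using lf_dist[OF lf] lf_mult[OF lf] by simp
      qed
      ultimately show "dist (f x') (f x) < e" using atpos by (simp add: field_simps)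
    qed
  qed
  have Kc: "compact (f ` cball 0 (d/2))"
    using compact_continuous_image[OF continuous_on_subset[OF cont] K] by simp
  have sub: "cball c R \<subseteq> f ` cball 0 (d/2)"
  proof
    fix y assume y: "y \<in> cball c R"
    define z where "z = (y - c) / t"
    have "f z = y" unfolding f_def z_def using t by simp
    moreover have "dist 0 z \<le> d/2"
    proof -
      have "dist 0 z = absv (y - c) / absv t"
        using lf_dist[OF lf, of z 0] lf_div[OF lf t(1)] by (simp add: dist_commute z_def)
      also have "absv (y - c) \<le> \<bar>R\<bar>" using y lf_dist[OF lf, of y c] by (simp add: dist_commute)
      then have "absv (y - c) / absv t \<le> \<bar>R\<bar> / absv t" using atpos by (simp add: divide_right_mono)
      also have "\<bar>R\<bar> / absv t \<le> d/2"
      proof -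
        have "2 * \<bar>R\<bar> \<le> absv t * d" using at d(1) by (simp add: field_simps)
        then show ?thesis using atpos by (simp add: field_simps)
      qed
      finally show ?thesis .
    qed
    ultimately show "y \<in> f ` cball 0 (d/2)" by force
  qed
  show ?thesis using compact_Int_closed[OF Kc closed_cball, of c R] sub by (simp add: Int_absorb1)
qed



lemma val_discrete:
  assumes lf: "local_field_absv absv q" and r: "r > 0" and nv: "\<forall>k::int. r \<noteq> q powi k"
  shows "\<exists>k::int. q powi k < r \<and> (\<forall>x. absv x \<le> r \<longrightarrow> absv x \<le> q powi k)"
proof -
  have q1: "q > 1" using lf_q[OF lf] by simp
  define k where "k = floor (log q r)"
  have "q powi k \<le> r"
  proof -
    have "q powr real_of_int k \<le> q powr (log q r)"
      using q1 by (intro powr_mono) (auto simp: k_def)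
    then show ?thesis using q1 r by (simp add: powr_real_of_int')
  qed
  then have lt: "q powi k < r" using nv by (metis order_le_imp_less_or_eq)
  have up: "r < q powi (k + 1)"
  proof -
    have "log q r < real_of_int (k + 1)" unfolding k_def by linarith
    then have "q powr (log q r) < q powr real_of_int (k+1)"
      using q1 by (intro powr_less_mono) auto
    moreover have "q powr real_of_int (k+1) = q powi (k+1)"
      by (rule powr_real_of_int') (use q1 in auto)
    ultimately show ?thesis using q1 r by simp
  qed
  have "absv x \<le> q powi k" if "absv x \<le> r" for x
  proof -
    from lf_val_cases[OF lf, of x] show ?thesis
    proof
      assume "absv x = 0" then show ?thesis using q1 by simp
    next
      assume "\<exists>j. absv x = q powi j"
      then obtain j where j: "absv x = q powi j" by blast
      have "j \<le> k"
      proof (rule ccontr)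
        assume "\<not> j \<le> k"
        then have "k + 1 \<le> j" by simp
        then have "q powi (k+1) \<le> q powi j" using q1 by (intro power_int_increasing) auto
        then show False using j that up by simp
      qed
      then show ?thesis using j q1 by (simp add: power_int_increasing)
    qed
  qed
  then show ?thesis using lt by blast
qed

locale LX =
  fixes M :: "'a measure" and absv :: "'k::{field,metric_space} \<Rightarrow> real" and q :: real
    and X :: "'a \<Rightarrow> 'k"
  assumes lf: "local_field_absv absv q"
    and P: "prob_space M"
    and L: "in_Linf M absv X"
begin

abbreviation "N c \<equiv> norm_inf M absv (\<lambda>\<omega>. X \<omega> - c)"

lemma Xmeas: "X \<in> borel_measurable M" using L unfolding in_Linf_def by simp

lemma meas: "(\<lambda>\<omega>. ereal (absv (X \<omega> - c))) \<in> borel_measurable M"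
proof -
  have "(\<lambda>\<omega>. ereal (absv (X \<omega> - c))) = (\<lambda>y. ereal (dist y c)) \<circ> X"
    using lf_dist[OF lf] by (simp add: o_def)
  moreover have "(\<lambda>y. ereal (dist y c)) \<in> borel_measurable borel"
    by (intro borel_measurable_continuous_onI continuous_intros)
  ultimately show ?thesis using measurable_comp[OF Xmeas] by simp
qed

lemma AEle: "AE \<omega> in M. ereal (absv (X \<omega> - c)) \<le> N c"
  unfolding norm_inf_def by (rule esssup_AE)

lemma leI: "AE \<omega> in M. ereal (absv (X \<omega> - c)) \<le> z \<Longrightarrow> N c \<le> z"
  unfolding norm_inf_def by (rule esssup_I[OF meas])

lemma AE_ex: "AE \<omega> in M. Q \<omega> \<Longrightarrow> \<exists>\<omega>. Q \<omega>"
proof (rule ccontr)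
  assume a: "AE \<omega> in M. Q \<omega>" "\<not> (\<exists>\<omega>. Q \<omega>)"
  then have "AE \<omega> in M. False" by (auto elim: eventually_mono)
  then show False using prob_space.AE_False[OF P] by simp
qed

lemma tri: "N c \<le> max (N c') (ereal (absv (c' - c)))"
proof (rule leI)
  show "AE \<omega> in M. ereal (absv (X \<omega> - c)) \<le> max (N c') (ereal (absv (c' - c)))"
    using AEle[of c']
  proof (rule eventually_mono)
    fix \<omega> assume h: "ereal (absv (X \<omega> - c')) \<le> N c'"
    have eq: "X \<omega> - c = (X \<omega> - c') + (c' - c)" by simp
    have "absv (X \<omega> - c) \<le> max (absv (X \<omega> - c')) (absv (c' - c))"
      by (subst eq) (rule lf_ultra[OF lf])
    then have "ereal (absv (X \<omega> - c)) \<le> max (ereal (absv (X \<omega> - c'))) (ereal (absv (c' - c)))"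
      by (simp add: max_def split: if_splits)
    also have "\<dots> \<le> max (N c') (ereal (absv (c' - c)))" using h by (intro max.mono) auto
    finally show "ereal (absv (X \<omega> - c)) \<le> max (N c') (ereal (absv (c' - c)))" .
  qed
qed

lemma dist_le: "ereal (absv (c - c')) \<le> max (N c) (N c')"
proof -
  have "AE \<omega> in M. ereal (absv (c - c')) \<le> max (N c) (N c')"
    using AEle[of c] AEle[of c']
  proof (eventually_elim)
    case (elim \<omega>)
    have eq: "c - c' = (X \<omega> - c') + (- (X \<omega> - c))" by simp
    have "absv (c - c') \<le> max (absv (X \<omega> - c')) (absv (- (X \<omega> - c)))"
      by (subst eq) (rule lf_ultra[OF lf])
    moreover have "absv (- (X \<omega> - c)) = absv (X \<omega> - c)"
      using lf_sym[OF lf, of c "X \<omega>"] by simp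
    ultimately have "ereal (absv (c - c')) \<le> max (ereal (absv (X \<omega> - c'))) (ereal (absv (X \<omega> - c)))"
      by (simp add: max_def split: if_splits)
    also have "\<dots> \<le> max (N c) (N c')" using elim by (subst max.commute) (intro max.mono; simp)
    finally show ?case .
  qed
  then show ?thesis using AE_ex by blast
qed

lemma N_nonneg: "N c \<ge> 0"
proof -
  have "AE \<omega> in M. 0 \<le> N c"
    using AEle[of c]
  proof (rule eventually_mono)
    fix \<omega> assume h: "ereal (absv (X \<omega> - c)) \<le> N c"
    have "0 \<le> ereal (absv (X \<omega> - c))" using lf_nonneg[OF lf] by simp
    then show "0 \<le> N c" using h by (rule order_trans)
  qed
  then show ?thesis using AE_ex by blast
qed

lemma N_fin: "N c < \<infinity>"
proof -
  have "N 0 = norm_inf M absv X" by simp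
  then have "N 0 < \<infinity>" using L unfolding in_Linf_def by simp
  then have "max (N 0) (ereal (absv (0 - c))) < \<infinity>" by (simp add: max_def)
  with tri[of c 0] show ?thesis by (rule order.strict_trans1)
qed

lemma N_val: "N c = 0 \<or> (\<exists>k::int. N c = ereal (q powi k))"
proof -
  obtain r where r: "N c = ereal r" using N_fin[of c] N_nonneg[of c] by (cases "N c") auto
  have r0: "r \<ge> 0" using N_nonneg[of c] r by simp
  show ?thesis
  proof (rule ccontr)
    assume "\<not> ?thesis"
    then have rp: "r > 0" and nv: "\<forall>k::int. r \<noteq> q powi k" using r r0 by auto
    obtain k where k: "q powi k < r" "\<forall>x. absv x \<le> r \<longrightarrow> absv x \<le> q powi k"
      using val_discrete[OF lf rp nv] by blast
    have "AE \<omega> in M. ereal (absv (X \<omega> - c)) \<le> ereal (q powi k)"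
      using AEle[of c]
    proof (rule eventually_mono)
      fix \<omega> assume "ereal (absv (X \<omega> - c)) \<le> N c"
      then have "absv (X \<omega> - c) \<le> r" using r by simp
      then have "absv (X \<omega> - c) \<le> q powi k" using k(2) by blast
      then show "ereal (absv (X \<omega> - c)) \<le> ereal (q powi k)" by simp
    qed
    then have "N c \<le> ereal (q powi k)" by (rule leI)
    then show False using k(1) r by simp
  qed
qed

definition "eps = (INF c. N c)"

lemma eps_eq: "eps_dev M absv X = eps" unfolding eps_dev_def eps_def by simp

lemma eps_le: "eps \<le> N c" unfolding eps_def by (rule INF_lower) simp

lemma eps_nonneg: "eps \<ge> 0" unfolding eps_def by (rule INF_greatest) (rule N_nonneg)

lemma eps_fin: "eps < \<infinity>" using eps_le[of 0] N_fin[of 0] by (rule order.strict_trans1)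

lemma attained: "\<exists>c0. N c0 = eps"
proof (cases "eps = 0")
  case True
  have "\<forall>n::nat. \<exists>c. N c < ereal (inverse (real (Suc n)))"
  proof
    fix n :: nat
    have "eps < ereal (inverse (real (Suc n)))" using True by simp
    then show "\<exists>c. N c < ereal (inverse (real (Suc n)))" unfolding eps_def INF_less_iff by blast
  qed
  then obtain cs where cs: "\<And>n. N (cs n) < ereal (inverse (real (Suc n)))"
    using choice[OF \<open>\<forall>n::nat. \<exists>c. N c < ereal (inverse (real (Suc n)))\<close>] by blast
  have "AE \<omega> in M. \<forall>n. ereal (absv (X \<omega> - cs n)) \<le> N (cs n)"
    unfolding AE_all_countable using AEle by blast
  then obtain \<omega> where w: "\<And>n. ereal (absv (X \<omega> - cs n)) \<le> N (cs n)" using AE_ex by blast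
  define c0 where "c0 = X \<omega>"
  have b: "N c0 < ereal (inverse (real (Suc n)))" for n
  proof -
    have "N c0 \<le> max (N (cs n)) (ereal (absv (cs n - c0)))" by (rule tri)
    also have "absv (cs n - c0) = absv (X \<omega> - cs n)" using lf_sym[OF lf] c0_def by simp
    also have "max (N (cs n)) (ereal (absv (X \<omega> - cs n))) = N (cs n)" using w[of n] by (simp add: max_def)
    finally show ?thesis using cs[of n] by simp
  qed
  obtain r where r: "N c0 = ereal r" using N_fin[of c0] N_nonneg[of c0] by (cases "N c0") auto
  have "r \<le> 0"
  proof (rule ccontr)
    assume "\<not> r \<le> 0"
    then obtain m where m: "m > 0" "inverse (real m) < r" using ex_inverse_of_nat_less[of r] by auto
    then obtain n where "m = Suc n" by (cases m) auto
    then show False using b[of n] m r by simp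
  qed
  then have "N c0 = 0" using r N_nonneg[of c0] by simp
  then show ?thesis using True by auto
next
  case False
  have q1: "q > 1" using lf_q[OF lf] by simp
  obtain e where e: "eps = ereal e" using eps_fin eps_nonneg by (cases eps) auto
  have ep: "e > 0" using e False eps_nonneg by simp
  have "eps < ereal (q * e)" using e ep q1 by simp
  then obtain c0 where c0: "N c0 < ereal (q * e)" unfolding eps_def INF_less_iff by blast
  have "N c0 \<noteq> 0" using eps_le[of c0] e ep by auto
  then obtain k where k: "N c0 = ereal (q powi k)" using N_val[of c0] by blast
  have "N c0 \<le> N c" for c
  proof (rule ccontr)
    assume a: "\<not> N c0 \<le> N c"
    have ge: "ereal e \<le> N c" using eps_le[of c] e by simp
    then have "N c \<noteq> 0" using ep by auto
    then obtain j where j: "N c = ereal (q powi j)" using N_val[of c] by blast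
    have "j \<le> k - 1"
    proof (rule ccontr)
      assume "\<not> j \<le> k - 1"
      then have "k \<le> j" by simp
      then have "q powi k \<le> q powi j" using q1 by (intro power_int_increasing) auto
      then show False using a j k by simp
    qed
    then have "q powi j \<le> q powi (k - 1)" using q1 by (intro power_int_increasing) auto
    also have "q powi (k - 1) = q powi k / q" using q1 by (simp add: power_int_diff)
    also have "\<dots> < e" using c0 k q1 by (simp add: field_simps)
    finally show False using ge j by simp
  qed
  then have "N c0 \<le> eps" unfolding eps_def by (rule INF_greatest)
  then show ?thesis using eps_le[of c0] by (intro exI[of _ c0]) simp
qed

end



context LX begin

lemma distr_open: "open U \<Longrightarrow> emeasure (distr M borel X) U = 0 \<longleftrightarrow> (AE \<omega> in M. X \<omega> \<notin> U)"
proof -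
  assume U: "open U"
  then have Ub: "U \<in> sets borel" by simp
  have "emeasure (distr M borel X) U = emeasure M (X -` U \<inter> space M)"
    by (rule emeasure_distr[OF Xmeas Ub])
  moreover have "(AE \<omega> in M. X \<omega> \<notin> U) \<longleftrightarrow> emeasure M (X -` U \<inter> space M) = 0"
    by (rule AE_iff_measurable) (auto intro: measurable_sets[OF Xmeas Ub])
  ultimately show ?thesis by simp
qed

lemma in_ball_AE:
  assumes S: "law_support M X \<subseteq> cball c r"
  shows "AE \<omega> in M. X \<omega> \<in> cball c r"
proof -
  have K: "AE \<omega> in M. X \<omega> \<notin> cball c (real n) \<inter> - ball c (r + inverse (real (Suc m)))" for n m
  proof -
    define K where "K = cball c (real n) \<inter> - ball c (r + inverse (real (Suc m)))"
    have Kc: "compact K" unfolding K_def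
      by (intro compact_Int_closed lf_compact_cball[OF lf] closed_Compl open_ball)
    define T where "T = {U. open U \<and> (AE \<omega> in M. X \<omega> \<notin> U)}"
    have "K \<subseteq> \<Union>T"
    proof
      fix y assume y: "y \<in> K"
      then have "\<not> dist c y < r + inverse (real (Suc m))" unfolding K_def by simp
      moreover have "inverse (real (Suc m)) > 0" by simp
      ultimately have "dist c y > r" by linarith
      then have "y \<notin> cball c r" by simp
      then have "y \<notin> law_support M X" using S by blast
      then obtain U where U: "open U" "y \<in> U" "\<not> emeasure (distr M borel X) U > 0"
        unfolding law_support_def by blast
      then have "emeasure (distr M borel X) U = 0" by (simp add: not_less)
      then have "U \<in> T" using distr_open[OF U(1)] U(1) unfolding T_def by simp
      then show "y \<in> \<Union>T" using U(2) by blast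
    qed
    then obtain T' where T': "T' \<subseteq> T" "finite T'" "K \<subseteq> \<Union>T'"
      by (rule compactE[OF Kc]) (simp add: T_def)
    have "AE \<omega> in M. \<forall>U\<in>T'. X \<omega> \<notin> U"
      using T' by (intro AE_finite_allI) (auto simp: T_def)
    then have "AE \<omega> in M. X \<omega> \<notin> K" by (rule eventually_mono) (use T'(3) in blast)
    then show ?thesis by (simp add: K_def)
  qed
  have "AE \<omega> in M. \<forall>n m. X \<omega> \<notin> cball c (real n) \<inter> - ball c (r + inverse (real (Suc m)))"
    unfolding AE_all_countable using K by blast
  then show ?thesis
  proof (rule eventually_mono)
    fix \<omega> assume h: "\<forall>n m. X \<omega> \<notin> cball c (real n) \<inter> - ball c (r + inverse (real (Suc m)))"
    show "X \<omega> \<in> cball c r"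
    proof (rule ccontr)
      assume "X \<omega> \<notin> cball c r"
      then have d: "dist c (X \<omega>) - r > 0" by simp
      obtain n where n: "dist c (X \<omega>) \<le> real n" using real_arch_simple by blast
      obtain m0 where m0: "m0 > 0" "inverse (real m0) < dist c (X \<omega>) - r"
        using ex_inverse_of_nat_less[OF d] by auto
      then obtain m where m: "m0 = Suc m" by (cases m0) auto
      have "X \<omega> \<in> cball c (real n) \<inter> - ball c (r + inverse (real (Suc m)))"
        using n m0 m by simp
      then show False using h by blast
    qed
  qed
qed

end

theorem mainTheorem1:
  fixes M :: "'a measure" and absv :: "'k::{field,metric_space} \<Rightarrow> real" and q :: real
    and X :: "'a \<Rightarrow> 'k"
  assumes "local_field_absv absv q"
    and "prob_space M"
    and "in_Linf M absv X"
  shows "nexp M absv X \<noteq> {}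
    \<and> (\<exists>c. nexp M absv X = cball c (real_of_ereal (eps_dev M absv X)))
    \<and> law_support M X \<subseteq> nexp M absv X
    \<and> (\<forall>c r. r \<ge> 0 \<longrightarrow> law_support M X \<subseteq> cball c r \<longrightarrow> nexp M absv X \<subseteq> cball c r)"
proof -
  interpret LX M absv q X by (rule LX.intro[OF assms])
  obtain c0 where c0: "N c0 = eps" using attained by blast
  obtain e where e: "eps = ereal e" using eps_fin eps_nonneg by (cases eps) auto
  have e0: "e \<ge> 0" using e eps_nonneg by simp
  have nx: "nexp M absv X = {c. N c = eps}" unfolding nexp_def eps_eq by simp
  have H: "nexp M absv X = cball c0 e"
  proof (rule set_eqI)
    fix c
    show "c \<in> nexp M absv X \<longleftrightarrow> c \<in> cball c0 e"
    proof
      assume "c \<in> nexp M absv X"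
      then have "N c = eps" using nx by simp
      then have "ereal (absv (c0 - c)) \<le> ereal e" using dist_le[of c0 c] c0 e by (simp add: max_def)
      then show "c \<in> cball c0 e" using lf_dist[OF lf] by simp
    next
      assume "c \<in> cball c0 e"
      then have "absv (c0 - c) \<le> e" using lf_dist[OF lf] by simp
      then have "N c \<le> eps" using tri[of c c0] c0 e by (simp add: max_def split: if_splits)
      then have "N c = eps" using eps_le[of c] by simp
      then show "c \<in> nexp M absv X" using nx by simp
    qed
  qed
  have re: "real_of_ereal (eps_dev M absv X) = e" using eps_eq e by simp
  have part3: "law_support M X \<subseteq> nexp M absv X"
  proof
    fix x assume x: "x \<in> law_support M X"
    show "x \<in> nexp M absv X"
    proof (rule ccontr)
      assume "x \<notin> nexp M absv X"
      then have xU: "x \<in> - cball c0 e" using H by simp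
      have oU: "open (- cball c0 e)" by (simp add: open_Compl)
      have "AE \<omega> in M. X \<omega> \<notin> - cball c0 e"
        using AEle[of c0]
      proof (rule eventually_mono)
        fix \<omega> assume "ereal (absv (X \<omega> - c0)) \<le> N c0"
        then have "absv (X \<omega> - c0) \<le> e" using c0 e by simp
        then show "X \<omega> \<notin> - cball c0 e" using lf_dist[OF lf, of "X \<omega>" c0] by (simp add: dist_commute)
      qed
      then have "emeasure (distr M borel X) (- cball c0 e) = 0" using distr_open[OF oU] by simp
      moreover have "emeasure (distr M borel X) (- cball c0 e) > 0"
        using x xU oU unfolding law_support_def by blast
      ultimately show False by simp
    qed
  qed
  have part4: "\<forall>c r. r \<ge> 0 \<longrightarrow> law_support M X \<subseteq> cball c r \<longrightarrow> nexp M absv X \<subseteq> cball c r"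
  proof (intro allI impI subsetI)
    fix c r c' assume r: "r \<ge> 0" and S: "law_support M X \<subseteq> cball c r" and c': "c' \<in> nexp M absv X"
    have "AE \<omega> in M. ereal (absv (X \<omega> - c)) \<le> ereal r"
      using in_ball_AE[OF S]
    proof (rule eventually_mono)
      fix \<omega> assume "X \<omega> \<in> cball c r"
      then show "ereal (absv (X \<omega> - c)) \<le> ereal r"
        using lf_dist[OF lf, of "X \<omega>" c] by (simp add: dist_commute)
    qed
    then have Nc: "N c \<le> ereal r" by (rule leI)
    have "N c' = eps" using c' nx by simp
    then have "N c' \<le> N c" using eps_le[of c] by simp
    then have "ereal (absv (c - c')) \<le> N c" using dist_le[of c c'] by (simp add: max_def split: if_splits)
    then have "ereal (absv (c - c')) \<le> ereal r" using Nc by (rule order_trans)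
    then have "absv (c - c') \<le> r" by simp
    then show "c' \<in> cball c r" using lf_dist[OF lf] by simp
  qed
  show ?thesis
  proof (intro conjI)
    show "nexp M absv X \<noteq> {}" using H e0 centre_in_cball[of c0 e] by blast
    show "\<exists>c. nexp M absv X = cball c (real_of_ereal (eps_dev M absv X))" unfolding re using H by blast
    show "law_support M X \<subseteq> nexp M absv X" by (rule part3)
    show "\<forall>c r. r \<ge> 0 \<longrightarrow> law_support M X \<subseteq> cball c r \<longrightarrow> nexp M absv X \<subseteq> cball c r"
      by (rule part4)
  qed
qed

end
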